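(* Let $r\in C(0,1)$ be such that $\inf_{x\in[a,b]}r(x)>0$ for every $[a,b]\subset(0,1)$, and let $\gamma>1$. Then there exists $\delta>0$ such that $B_{r,\gamma,\delta}\ne\varnothing$.
   Context: $A_{r,\gamma}=\{q\in L_{1,loc}(0,1): q\ge0,\ \int_0^1 rq^\gamma\,dx\le1\}$. For a nonnegative $q\in C(0,1)$ with compact support in $(0,1)$, $\lambda_0(q)$ is the smallest eigenvalue of $-y''+qy=\lambda y$, $y(0)=y(1)=0$. $B_{r,\gamma,\delta}$ is the set of $q\in A_{r,\gamma}$ that are continuous on $(0,1)$ with compact support in $(0,1)$ and satisfy $\lambda_0(q)\ge\pi^2+\delta$. *)

theory Defs
  imports "HOL-Analysis.Analysis"
begin

definition loc_integrable01 :: "(real \<Rightarrow> real) \<Rightarrow> bool" where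
  "loc_integrable01 q \<longleftrightarrow>
     (\<forall>a b. 0 < a \<longrightarrow> a \<le> b \<longrightarrow> b < 1 \<longrightarrow> integrable (lebesgue_on {a..b}) q)"

definition A_set :: "(real \<Rightarrow> real) \<Rightarrow> real \<Rightarrow> (real \<Rightarrow> real) set" where
  "A_set r \<gamma> = {q. loc_integrable01 q \<and> (\<forall>x\<in>{0<..<1}. q x \<ge> 0) \<and>
      (\<integral>\<^sup>+ x\<in>{0<..<1}. ennreal (r x * q x powr \<gamma>) \<partial>lborel) \<le> 1}"

definition is_eigenvalue :: "(real \<Rightarrow> real) \<Rightarrow> real \<Rightarrow> bool" where
  "is_eigenvalue q lam \<longleftrightarrow>
     (\<exists>y y'. continuous_on {0..1} y \<and> y 0 = 0 \<and> y 1 = 0 \<and>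
        (\<exists>x\<in>{0<..<1}. y x \<noteq> 0) \<and>
        (\<forall>x\<in>{0<..<1}. (y has_real_derivative y' x) (at x) \<and>
            (y' has_real_derivative (q x * y x - lam * y x)) (at x)))"

definition lambda0 :: "(real \<Rightarrow> real) \<Rightarrow> real" where
  "lambda0 q = Inf {lam. is_eigenvalue q lam}"

definition compact_support01 :: "(real \<Rightarrow> real) \<Rightarrow> bool" where
  "compact_support01 q \<longleftrightarrow>
     (\<exists>a b. 0 < a \<and> a \<le> b \<and> b < 1 \<and> (\<forall>x\<in>{0<..<1}. x \<notin> {a..b} \<longrightarrow> q x = 0))"

definition B_set :: "(real \<Rightarrow> real) \<Rightarrow> real \<Rightarrow> real \<Rightarrow> (real \<Rightarrow> real) set" where
  "B_set r \<gamma> \<delta> = {q \<in> A_set r \<gamma>. continuous_on {0<..<1} q \<and> compact_support01 q \<and>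
      lambda0 q \<ge> pi\<^sup>2 + \<delta>}"

end

theory Submission
  imports Defs
begin



lemma glue:
  fixes f g :: "real \<Rightarrow> real"
  assumes "(f has_real_derivative D) (at x)" "(g has_real_derivative D) (at x)" "f x = g x"
  shows "((\<lambda>t. if t \<le> x then f t else g t) has_real_derivative D) (at x)"
proof -
  let ?F = "(\<lambda>t. if t \<le> x then f t else g t)"
  have f: "((\<lambda>y. (f y - f x) / (y - x)) \<longlongrightarrow> D) (at x)"
    using assms(1) has_field_derivative_iff by blast
  have g: "((\<lambda>y. (g y - g x) / (y - x)) \<longlongrightarrow> D) (at x)"
    using assms(2) has_field_derivative_iff by blast
  have L: "((\<lambda>y. (?F y - ?F x) / (y - x)) \<longlongrightarrow> D) (at_left x)"
  proof -
    have "((\<lambda>y. (f y - f x) / (y - x)) \<longlongrightarrow> D) (at_left x)"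
      using f filterlim_at_split by blast
    moreover have "eventually (\<lambda>y. (f y - f x) / (y - x) = (?F y - ?F x) / (y - x)) (at_left x)"
    proof -
      have "eventually (\<lambda>y. y \<in> {x-1<..<x}) (at_left x)" by (rule eventually_at_left_real) simp
      then show ?thesis by (rule eventually_mono) simp
    qed
    ultimately show ?thesis by (rule Lim_transform_eventually)
  qed
  have R: "((\<lambda>y. (?F y - ?F x) / (y - x)) \<longlongrightarrow> D) (at_right x)"
  proof -
    have "((\<lambda>y. (g y - g x) / (y - x)) \<longlongrightarrow> D) (at_right x)"
      using g filterlim_at_split by blast
    moreover have "eventually (\<lambda>y. (g y - g x) / (y - x) = (?F y - ?F x) / (y - x)) (at_right x)"
    proof -
      have "eventually (\<lambda>y. y \<in> {x<..<x+1}) (at_right x)" by (rule eventually_at_right_real) simp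
      then show ?thesis by (rule eventually_mono) (simp add: assms(3))
    qed
    ultimately show ?thesis by (rule Lim_transform_eventually)
  qed
  show ?thesis unfolding has_field_derivative_iff filterlim_at_split using L R by (rule conjI)
qed

lemma deriv3:
  fixes f g k f' g' k' :: "real \<Rightarrow> real"
  assumes ab: "a < b"
    and df: "\<And>x. (f has_real_derivative f' x) (at x)"
    and dg: "\<And>x. (g has_real_derivative g' x) (at x)"
    and dk: "\<And>x. (k has_real_derivative k' x) (at x)"
    and e1: "f a = g a" "f' a = g' a" and e2: "g b = k b" "g' b = k' b"
  shows "((\<lambda>t. if t \<le> a then f t else if t \<le> b then g t else k t) has_real_derivative
           (if x \<le> a then f' x else if x \<le> b then g' x else k' x)) (at x)"
proof -
  let ?F = "\<lambda>t. if t \<le> a then f t else if t \<le> b then g t else k t"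
  consider "x < a" | "x = a" | "a < x" "x < b" | "x = b" | "b < x" by linarith
  then show ?thesis
  proof cases
    case 1
    have "eventually (\<lambda>t. t \<in> {..<a}) (nhds x)" using 1 by (intro eventually_nhds_in_open) auto
    then have ev: "eventually (\<lambda>t. ?F t = f t) (nhds x)" by (rule eventually_mono) simp
    have "(if x \<le> a then f' x else if x \<le> b then g' x else k' x) = f' x" using 1 by simp
    then show ?thesis using DERIV_cong_ev[OF refl ev refl] df[of x] by simp
  next
    case 2
    have "eventually (\<lambda>t. t \<in> {..<b}) (nhds x)" using 2 ab by (intro eventually_nhds_in_open) auto
    then have ev: "eventually (\<lambda>t. ?F t = (if t \<le> a then f t else g t)) (nhds x)"
      by (rule eventually_mono) simp
    have gl: "((\<lambda>t. if t \<le> a then f t else g t) has_real_derivative f' a) (at a)"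
      using glue[OF df[of a] dg[of a, folded e1(2)] e1(1)] .
    have "(if x \<le> a then f' x else if x \<le> b then g' x else k' x) = f' a" using 2 by simp
    then show ?thesis using DERIV_cong_ev[OF refl ev refl] gl 2 by simp
  next
    case 3
    have "eventually (\<lambda>t. t \<in> {a<..<b}) (nhds x)" using 3 by (intro eventually_nhds_in_open) auto
    then have ev: "eventually (\<lambda>t. ?F t = g t) (nhds x)" by (rule eventually_mono) simp
    have "(if x \<le> a then f' x else if x \<le> b then g' x else k' x) = g' x" using 3 by simp
    then show ?thesis using DERIV_cong_ev[OF refl ev refl] dg[of x] by simp
  next
    case 4
    have "eventually (\<lambda>t. t \<in> {a<..}) (nhds x)" using 4 ab by (intro eventually_nhds_in_open) auto
    then have ev: "eventually (\<lambda>t. ?F t = (if t \<le> b then g t else k t)) (nhds x)"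
      by (rule eventually_mono) simp
    have gl: "((\<lambda>t. if t \<le> b then g t else k t) has_real_derivative g' b) (at b)"
      using glue[OF dg[of b] dk[of b, folded e2(2)] e2(1)] .
    have "(if x \<le> a then f' x else if x \<le> b then g' x else k' x) = g' b" using 4 ab by simp
    then show ?thesis using DERIV_cong_ev[OF refl ev refl] gl 4 by simp
  next
    case 5
    have "eventually (\<lambda>t. t \<in> {b<..}) (nhds x)" using 5 by (intro eventually_nhds_in_open) auto
    then have ev: "eventually (\<lambda>t. ?F t = k t) (nhds x)" by (rule eventually_mono) (use ab in simp)
    have "(if x \<le> a then f' x else if x \<le> b then g' x else k' x) = k' x" using 5 ab by simp
    then show ?thesis using DERIV_cong_ev[OF refl ev refl] dk[of x] by simp
  qed
qed




lemma sturm_pos: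
  fixes y y' z z' q :: "real \<Rightarrow> real" and m lam x0 :: real
  assumes zc: "continuous_on {0..1} z" and z0: "z 0 = 0" and z1: "z 1 = 0"
    and x0: "0 < x0" "x0 < 1" "z x0 > 0"
    and ypos: "\<forall>x\<in>{0<..<1}. y x > 0"
    and yd: "\<forall>x\<in>{0<..<1}. (y has_real_derivative y' x) (at x) \<and>
              (y' has_real_derivative (q x * y x - m * y x)) (at x)"
    and zd: "\<forall>x\<in>{0<..<1}. (z has_real_derivative z' x) (at x) \<and>
              (z' has_real_derivative (q x * z x - lam * z x)) (at x)"
    and lm: "lam < m"
    and W0: "((\<lambda>x. y x * z' x - y' x * z x) \<longlongrightarrow> 0) (at_right 0)"
    and W1: "((\<lambda>x. y x * z' x - y' x * z x) \<longlongrightarrow> 0) (at_left 1)"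
  shows False
proof -
  define W where "W = (\<lambda>x. y x * z' x - y' x * z x)"
  have Wd: "(W has_real_derivative ((m - lam) * y x * z x)) (at x)" if "0 < x" "x < 1" for x
  proof -
    from yd zd that have a: "(y has_real_derivative y' x) (at x)" 
       "(y' has_real_derivative (q x * y x - m * y x)) (at x)"
       "(z has_real_derivative z' x) (at x)" 
       "(z' has_real_derivative (q x * z x - lam * z x)) (at x)" by auto
    note DERIV_diff[OF DERIV_mult[OF a(1) a(4)] DERIV_mult[OF a(2) a(3)]]
    then show ?thesis unfolding W_def by (rule DERIV_cong) (simp add: algebra_simps)
  qed
  define S where "S = {t \<in> {0..x0}. z t = 0}"
  define T where "T = {t \<in> {x0..1}. z t = 0}"
  have zc0: "continuous_on {0..x0} z" "continuous_on {x0..1} z"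
    using zc x0 by (auto intro: continuous_on_subset)
  have clS: "closed S" unfolding S_def
    by (rule continuous_closed_preimage_constant[OF zc0(1)]) auto
  have clT: "closed T" unfolding T_def
    by (rule continuous_closed_preimage_constant[OF zc0(2)]) auto
  have "0 \<in> S" using z0 x0 unfolding S_def by auto
  then have Sne: "S \<noteq> {}" by auto
  have "1 \<in> T" using z1 x0 unfolding T_def by auto
  then have Tne: "T \<noteq> {}" by auto
  have Sb: "bdd_above S" unfolding S_def by (auto intro: bdd_aboveI[of _ x0])
  have Tb: "bdd_below T" unfolding T_def by (auto intro: bdd_belowI[of _ x0])
  define c where "c = Sup S"
  define d where "d = Inf T"
  have cS: "c \<in> S" unfolding c_def by (rule closed_contains_Sup[OF Sne Sb clS])
  have dT: "d \<in> T" unfolding d_def by (rule closed_contains_Inf[OF Tne Tb clT])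
  have Sle: "t \<le> c" if "t \<in> S" for t unfolding c_def using that Sb by (rule cSup_upper)
  have Tge: "d \<le> t" if "t \<in> T" for t unfolding d_def using that Tb by (rule cInf_lower)
  have zc_: "z c = 0" "0 \<le> c" "c < x0" using cS x0 unfolding S_def by (auto simp: order.order_iff_strict)
  have zd_: "z d = 0" "d \<le> 1" "x0 < d" using dT x0 unfolding T_def by (auto simp: order.order_iff_strict)
  have zpos: "z t > 0" if "c < t" "t < d" for t
  proof (rule ccontr)
    assume neg: "\<not> z t > 0"
    show False
    proof (cases "t \<le> x0")
      case True
      have "continuous_on {t..x0} z" using zc0(1) zc_ that True by (auto intro: continuous_on_subset)
      then obtain s where "t \<le> s" "s \<le> x0" "z s = 0" using IVT'[of z t 0 x0] neg x0 True by force
      then have "s \<in> S" using zc_ that unfolding S_def by auto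
      then show False using Sle \<open>t \<le> s\<close> that by force
    next
      case False
      have "continuous_on {x0..t} z" using zc0(2) zd_ that False by (auto intro: continuous_on_subset)
      then obtain s where "x0 \<le> s" "s \<le> t" "z s = 0" using IVT2'[of z t 0 x0] neg x0 False by force
      then have "s \<in> T" using zd_ that unfolding T_def by auto
      then show False using Tge \<open>s \<le> t\<close> that by force
    qed
  qed
  have cd: "c < d" using zc_ zd_ by auto
  have mono: "W s < W e" if "c < s" "s < e" "e < d" for s e
  proof (rule DERIV_pos_imp_increasing[OF \<open>s < e\<close>])
    fix x assume "s \<le> x" "x \<le> e"
    then have x: "c < x" "x < d" "0 < x" "x < 1" using that zc_ zd_ by auto
    have "(m - lam) * y x * z x > 0" using lm ypos zpos[OF x(1,2)] x by auto
    then show "\<exists>D. (W has_real_derivative D) (at x) \<and> D > 0" using Wd[OF x(3,4)] by blast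
  qed
  obtain Lc where Lc: "Lc \<ge> 0" "(W \<longlongrightarrow> Lc) (at_right c)"
  proof (cases "c = 0")
    case True then show ?thesis using that W0 unfolding W_def by auto
  next
    case False
    then have c01: "0 < c" "c < 1" using zc_ x0 by auto
    have dc: "(W has_real_derivative ((m - lam) * y c * z c)) (at c)" using Wd[OF c01] .
    then have "isCont W c" by (rule DERIV_isCont)
    then have t: "(W \<longlongrightarrow> W c) (at_right c)"
      by (simp add: isCont_def filterlim_at_split)
    have zdc: "(z has_real_derivative z' c) (at c)" using zd c01 by auto
    have "z' c \<ge> 0"
    proof (rule ccontr)
      assume "\<not> z' c \<ge> 0"
      then obtain e where e: "e > 0" "\<forall>h>0. h < e \<longrightarrow> z c > z (c + h)"
        using DERIV_neg_dec_right[OF zdc] by force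
      define h where "h = min (e/2) ((x0 - c)/2)"
      have hh: "h > 0" using e zc_ unfolding h_def by simp
      have h1: "h \<le> e/2" unfolding h_def by (rule min.cobounded1)
      have h2: "h \<le> (x0 - c)/2" unfolding h_def by (rule min.cobounded2)
      have "c + h < x0" using h2 zc_(3) by argo
      then have "h > 0" "h < e" "c < c + h" "c + h < d" using h1 hh e zd_(3) by linarith+
      then show False using e zpos[of "c+h"] zc_ by force
    qed
    moreover have "y c > 0" using ypos c01 by auto
    ultimately have "W c \<ge> 0" unfolding W_def using zc_ by simp
    then show ?thesis using that t by blast
  qed
  obtain Ld where Ld: "Ld \<le> 0" "(W \<longlongrightarrow> Ld) (at_left d)"
  proof (cases "d = 1")
    case True then show ?thesis using that W1 unfolding W_def by auto
  next
    case False
    then have d01: "0 < d" "d < 1" using zd_ x0 by auto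
    have "(W has_real_derivative ((m - lam) * y d * z d)) (at d)" using Wd[OF d01] .
    then have "isCont W d" by (rule DERIV_isCont)
    then have t: "(W \<longlongrightarrow> W d) (at_left d)"
      by (simp add: isCont_def filterlim_at_split)
    have zdd: "(z has_real_derivative z' d) (at d)" using zd d01 by auto
    have "z' d \<le> 0"
    proof (rule ccontr)
      assume "\<not> z' d \<le> 0"
      then obtain e where e: "e > 0" "\<forall>h>0. h < e \<longrightarrow> z (d - h) < z d"
        using DERIV_pos_inc_left[OF zdd] by force
      define h where "h = min (e/2) ((d - x0)/2)"
      have hh: "h > 0" using e zd_ unfolding h_def by simp
      have h1: "h \<le> e/2" unfolding h_def by (rule min.cobounded1)
      have h2: "h \<le> (d - x0)/2" unfolding h_def by (rule min.cobounded2)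
      have "x0 < d - h" using h2 zd_(3) by argo
      then have "h > 0" "h < e" "c < d - h" "d - h < d" using h1 hh e zc_(3) by linarith+
      then show False using e zpos[of "d-h"] zd_ by force
    qed
    moreover have "y d > 0" using ypos d01 by auto
    ultimately have "W d \<le> 0" unfolding W_def using zd_ by (simp add: mult_nonneg_nonpos)
    then show ?thesis using that t by blast
  qed
  define s1 where "s1 = c + (d - c)/3"
  define s2 where "s2 = c + 2*(d - c)/3"
  have s: "c < s1" "s1 < s2" "s2 < d" using cd unfolding s1_def s2_def by (auto simp: field_simps)
  have "Lc \<le> W s1"
  proof (rule tendsto_upperbound[OF Lc(2)])
    show "eventually (\<lambda>t. W t \<le> W s1) (at_right c)"
      using eventually_at_right_real[OF s(1)] by eventually_elim (use mono s in force)
  qed (simp add: trivial_limit_at_right_real)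
  moreover have "W s2 \<le> Ld"
  proof (rule tendsto_lowerbound[OF Ld(2)])
    show "eventually (\<lambda>t. W s2 \<le> W t) (at_left d)"
      using eventually_at_left_real[OF s(3)] by eventually_elim (use s in \<open>auto intro!: less_imp_le[OF mono]\<close>)
  qed (simp add: trivial_limit_at_left_real)
  moreover have "W s1 < W s2" using mono s by auto
  ultimately show False using Lc Ld by linarith
qed




lemma poly_facts:
  fixes m h u :: real
  assumes h: "h > 0" and m: "m > 0" and mh: "m * h \<le> 1/4" and u: "\<bar>u\<bar> \<le> h"
  shows "1/2 \<le> 1 - m\<^sup>2 * h\<^sup>2 * (1 - u\<^sup>2 / h\<^sup>2)\<^sup>2 / 8"
    and "0 \<le> m\<^sup>2 * (1 - 3 * u\<^sup>2 / h\<^sup>2) / 2 + m\<^sup>2 * (1 - m\<^sup>2 * h\<^sup>2 * (1 - u\<^sup>2 / h\<^sup>2)\<^sup>2 / 8)"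
    and "m\<^sup>2 * (1 - 3 * u\<^sup>2 / h\<^sup>2) / 2 + m\<^sup>2 * (1 - m\<^sup>2 * h\<^sup>2 * (1 - u\<^sup>2 / h\<^sup>2)\<^sup>2 / 8) \<le> 3 * m\<^sup>2 / 2"
proof -
  define v where "v = u\<^sup>2 / h\<^sup>2"
  define k where "k = m\<^sup>2 * h\<^sup>2"
  have v0: "0 \<le> v" unfolding v_def by simp
  have "u\<^sup>2 \<le> h\<^sup>2" using u h by (metis abs_le_square_iff abs_of_pos)
  then have v1: "v \<le> 1" unfolding v_def using h by simp
  have k0: "0 \<le> k" unfolding k_def by simp
  have "k = (m * h)\<^sup>2" unfolding k_def by (simp add: power_mult_distrib)
  also have "\<dots> \<le> (1/4)\<^sup>2" using mh m h by (intro power_mono) auto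
  finally have k1: "k \<le> 1/16" by (simp add: power2_eq_square)
  have w0: "0 \<le> 1 - v" "1 - v \<le> 1" using v0 v1 by auto
  have "(1 - v)\<^sup>2 \<le> 1" using w0 by (simp add: power_le_one)
  then have "k * (1 - v)\<^sup>2 \<le> 1/16" using k0 k1 by (metis mult_mono mult.right_neutral zero_le_power2 order_trans[OF _ k1])
  then show "1/2 \<le> 1 - m\<^sup>2 * h\<^sup>2 * (1 - u\<^sup>2 / h\<^sup>2)\<^sup>2 / 8" unfolding k_def[symmetric] v_def[symmetric]
    by (simp add: mult.assoc)
  have eq: "m\<^sup>2 * (1 - 3 * u\<^sup>2 / h\<^sup>2) / 2 + m\<^sup>2 * (1 - m\<^sup>2 * h\<^sup>2 * (1 - u\<^sup>2 / h\<^sup>2)\<^sup>2 / 8)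
      = m\<^sup>2 * (1 - v) * (3/2 - k * (1 - v) / 8)"
    unfolding v_def k_def using h by (simp add: field_simps power2_eq_square)
  have b1: "0 \<le> 3/2 - k * (1 - v) / 8" "3/2 - k * (1 - v) / 8 \<le> 3/2"
    using k0 k1 w0 mult_mono[of k "1/16" "1 - v" 1] by auto
  show "0 \<le> m\<^sup>2 * (1 - 3 * u\<^sup>2 / h\<^sup>2) / 2 + m\<^sup>2 * (1 - m\<^sup>2 * h\<^sup>2 * (1 - u\<^sup>2 / h\<^sup>2)\<^sup>2 / 8)"
    unfolding eq using b1 w0 by simp
  have "m\<^sup>2 * (1 - v) * (3/2 - k * (1 - v) / 8) \<le> m\<^sup>2 * 1 * (3/2)"
    using b1 w0 by (intro mult_mono) auto
  then show "m\<^sup>2 * (1 - 3 * u\<^sup>2 / h\<^sup>2) / 2 + m\<^sup>2 * (1 - m\<^sup>2 * h\<^sup>2 * (1 - u\<^sup>2 / h\<^sup>2)\<^sup>2 / 8) \<le> 3 * m\<^sup>2 / 2"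
    unfolding eq by simp
qed




lemma wlim:
  fixes y z y' z' :: "real \<Rightarrow> real"
  assumes "(y \<longlongrightarrow> 0) F" "(z \<longlongrightarrow> 0) F"
    "eventually (\<lambda>x. \<bar>z' x\<bar> \<le> K1) F" "eventually (\<lambda>x. \<bar>y' x\<bar> \<le> K2) F"
  shows "((\<lambda>x. y x * z' x - y' x * z x) \<longlongrightarrow> 0) F"
proof (rule Lim_null_comparison)
  show "eventually (\<lambda>x. norm (y x * z' x - y' x * z x) \<le> \<bar>y x\<bar> * K1 + K2 * \<bar>z x\<bar>) F"
    using assms(3,4)
  proof eventually_elim
    case (elim x)
    have "\<bar>y x * z' x\<bar> \<le> \<bar>y x\<bar> * K1" using elim by (simp add: abs_mult mult_left_mono)
    moreover have "\<bar>y' x * z x\<bar> \<le> K2 * \<bar>z x\<bar>" using elim by (simp add: abs_mult mult_right_mono)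
    ultimately show ?case by auto
  qed
  have "((\<lambda>x. \<bar>y x\<bar>) \<longlongrightarrow> 0) F" "((\<lambda>x. \<bar>z x\<bar>) \<longlongrightarrow> 0) F"
    using assms(1,2) tendsto_rabs_zero by auto
  then show "((\<lambda>x. \<bar>y x\<bar> * K1 + K2 * \<bar>z x\<bar>) \<longlongrightarrow> 0) F"
    using tendsto_add[OF tendsto_mult_left_zero tendsto_mult_right_zero] by fastforce
qed




lemma abs_le_1_sq: "\<bar>t::real\<bar> \<le> 1 + t\<^sup>2"
proof -
  have "0 \<le> (\<bar>t\<bar> - 1/2)\<^sup>2" by simp
  then show ?thesis by (simp add: power2_eq_square algebra_simps abs_mult_self_eq)
qed

lemma energy:
  fixes z z' q :: "real \<Rightarrow> real"
  assumes zc: "continuous_on {0..1} z"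
    and zd: "\<forall>x\<in>{0<..<1}. (z has_real_derivative z' x) (at x) \<and>
              (z' has_real_derivative (q x * z x - lam * z x)) (at x)"
    and sub: "{\<alpha><..<\<beta>} \<subseteq> {0<..<1}"
    and q0: "\<forall>x\<in>{\<alpha><..<\<beta>}. q x = 0"
  shows "\<exists>K. \<forall>x\<in>{\<alpha><..<\<beta>}. \<bar>z' x\<bar> \<le> K"
proof -
  have "compact (z ` {0..1})" by (rule compact_continuous_image[OF zc]) simp
  then obtain B where B: "\<forall>x\<in>{0..1}. \<bar>z x\<bar> \<le> B"
    using compact_imp_bounded bounded_iff by (metis image_eqI real_norm_def)
  define E where "E = (\<lambda>x. (z' x)\<^sup>2 + lam * (z x)\<^sup>2)"
  have dE: "(E has_real_derivative 0) (at x within {\<alpha><..<\<beta>})" if x: "x \<in> {\<alpha><..<\<beta>}" for x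
  proof -
    have x01: "x \<in> {0<..<1}" using x sub by auto
    have d1: "(z has_real_derivative z' x) (at x)" "(z' has_real_derivative (q x * z x - lam * z x)) (at x)"
      using zd x01 by auto
    have "(E has_real_derivative (2 * z' x * (q x * z x - lam * z x) + lam * (2 * z x * z' x))) (at x)"
      unfolding E_def by (auto intro!: derivative_eq_intros d1 simp: power2_eq_square)
    moreover have "2 * z' x * (q x * z x - lam * z x) + lam * (2 * z x * z' x) = 0"
      using q0 x by (simp add: algebra_simps)
    ultimately show ?thesis by (simp add: has_field_derivative_at_within)
  qed
  obtain C where C: "\<forall>x\<in>{\<alpha><..<\<beta>}. E x = C"
    using has_field_derivative_zero_constant[OF convex_real_interval(8) dE] by blast
  show ?thesis
  proof (intro exI ballI)
    fix x assume x: "x \<in> {\<alpha><..<\<beta>}"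
    have zb: "\<bar>z x\<bar> \<le> B" using B x sub by auto
    then have "(z x)\<^sup>2 \<le> B\<^sup>2" by (metis abs_ge_zero power2_abs power_mono)
    then have "\<bar>lam\<bar> * (z x)\<^sup>2 \<le> \<bar>lam\<bar> * B\<^sup>2" by (intro mult_left_mono) auto
    moreover have "- (lam * (z x)\<^sup>2) \<le> \<bar>lam\<bar> * (z x)\<^sup>2"
      by (metis abs_ge_minus_self abs_mult abs_of_nonneg mult_right_mono zero_le_power2 minus_mult_left)
    moreover have "(z' x)\<^sup>2 = C - lam * (z x)\<^sup>2" using C x unfolding E_def by force
    ultimately have "(z' x)\<^sup>2 \<le> \<bar>C\<bar> + \<bar>lam\<bar> * B\<^sup>2" by linarith
    then show "\<bar>z' x\<bar> \<le> 1 + (\<bar>C\<bar> + \<bar>lam\<bar> * B\<^sup>2)" using abs_le_1_sq[of "z' x"] by linarith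
  qed
qed




lemma construction:
  fixes m :: real
  assumes m1: "pi < m" and m2: "m \<le> pi + 1/2"
  shows "\<exists>q y y'. continuous_on UNIV q \<and> (\<forall>x. 0 \<le> q x \<and> q x \<le> 64) \<and>
     (\<forall>x. x \<le> pi/(2*m) \<or> x \<ge> 1 - pi/(2*m) \<longrightarrow> q x = 0) \<and>
     (\<forall>x. (y has_real_derivative y' x) (at x) \<and>
          (y' has_real_derivative (q x * y x - m\<^sup>2 * y x)) (at x)) \<and>
     y 0 = 0 \<and> y 1 = 0 \<and> (\<forall>x\<in>{0<..<1}. y x > 0) \<and>
     (\<forall>x. x \<le> pi/(2*m) \<or> x \<ge> 1 - pi/(2*m) \<longrightarrow> \<bar>y' x\<bar> \<le> m)"
proof -
  define h where "h = (m - pi) / (2*m)"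
  define a where "a = pi / (2*m)"
  define b where "b = 1 - a"
  define pp where "pp = (\<lambda>u::real. 1 - m\<^sup>2 * h\<^sup>2 * (1 - u\<^sup>2 / h\<^sup>2)\<^sup>2 / 8)"
  define p1 where "p1 = (\<lambda>u::real. m\<^sup>2 * u * (1 - u\<^sup>2 / h\<^sup>2) / 2)"
  define p2 where "p2 = (\<lambda>u::real. m\<^sup>2 * (1 - 3 * u\<^sup>2 / h\<^sup>2) / 2)"
  define F where "F = (\<lambda>u. (p2 u + m\<^sup>2 * pp u) / pp u)"
  define cl where "cl = (\<lambda>x::real. max (-h) (min h (x - 1/2)))"
  define q where "q = (\<lambda>x. F (cl x))"
  define y where "y = (\<lambda>t. if t \<le> a then sin (m*t) else if t \<le> b then pp (t - 1/2) else sin (m*(1-t)))"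
  define y' where "y' = (\<lambda>t. if t \<le> a then m * cos (m*t) else if t \<le> b then p1 (t - 1/2) else - m * cos (m*(1-t)))"
  define y'' where "y'' = (\<lambda>t. if t \<le> a then - m\<^sup>2 * sin (m*t) else if t \<le> b then p2 (t - 1/2) else - m\<^sup>2 * sin (m*(1-t)))"
  have mpos: "m > 0" using m1 pi_gt_zero by linarith
  have hpos: "h > 0" unfolding h_def using m1 mpos by simp
  have mh0: "m * h = (m - pi)/2" unfolding h_def using mpos by (simp add: field_simps)
  have mh: "m * h \<le> 1/4" unfolding mh0 using m2 by argo
  have ma: "m * a = pi/2" unfolding a_def using mpos by simp
  have a_h: "a - 1/2 = - h" unfolding a_def h_def using mpos by (simp add: field_simps)
  have b_h: "b - 1/2 = h" unfolding b_def a_def h_def using mpos by (simp add: field_simps)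
  have ab: "a < b" using a_h b_h hpos by linarith
  have mb: "m * (1 - b) = pi/2" unfolding b_def using ma by simp
  have pph: "pp h = 1" "pp (-h) = 1" unfolding pp_def using hpos by simp_all
  have p1h: "p1 h = 0" "p1 (-h) = 0" unfolding p1_def using hpos by simp_all
  have p2h: "p2 h = - m\<^sup>2" "p2 (-h) = - m\<^sup>2" unfolding p2_def using hpos by simp_all
  have Fh: "F h = 0" "F (-h) = 0" unfolding F_def using pph p2h by simp_all
  have PF: "1/2 \<le> pp u" "0 \<le> p2 u + m\<^sup>2 * pp u" "p2 u + m\<^sup>2 * pp u \<le> 3 * m\<^sup>2 / 2" if "\<bar>u\<bar> \<le> h" for u
    unfolding pp_def p2_def using poly_facts[OF hpos mpos mh that] by auto
  have Fb: "0 \<le> F u \<and> F u \<le> 3 * m\<^sup>2" if "\<bar>u\<bar> \<le> h" for u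
  proof -
    have p: "pp u > 0" using PF(1)[OF that] by linarith
    have "F u \<le> (3 * m\<^sup>2 / 2) / (1/2)" unfolding F_def
      using PF[OF that] p by (intro frac_le) auto
    then show ?thesis unfolding F_def using PF[OF that] p by auto
  qed
  have clb: "\<bar>cl x\<bar> \<le> h" for x unfolding cl_def using hpos by auto
  have m64: "3 * m\<^sup>2 \<le> 64"
  proof -
    have "m \<le> 4.5" using m2 pi_less_4 by linarith
    then have "m\<^sup>2 \<le> 4.5\<^sup>2" using mpos by (intro power_mono) auto
    then show ?thesis by (simp add: power2_eq_square)
  qed
  have qb: "0 \<le> q x \<and> q x \<le> 64" for x unfolding q_def using Fb[OF clb[of x]] m64 by auto
  have q0: "q x = 0" if "x \<le> a \<or> x \<ge> b" for x
  proof -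
    have "cl x = -h \<or> cl x = h" unfolding cl_def using that a_h b_h hpos by auto
    then show ?thesis unfolding q_def using Fh by auto
  qed
  have qmid: "q x = F (x - 1/2)" if "a \<le> x" "x \<le> b" for x
  proof -
    have "cl x = x - 1/2" unfolding cl_def using that a_h b_h by auto
    then show ?thesis unfolding q_def by simp
  qed
  have qc: "continuous_on UNIV q" unfolding q_def
  proof (rule continuous_on_compose2[of "{-h..h}" F UNIV cl])
    have nz: "pp u \<noteq> 0" if "u \<in> {-h..h}" for u
    proof -
      have "\<bar>u\<bar> \<le> h" using that by (simp add: abs_le_iff)
      from PF(1)[OF this] show ?thesis by linarith
    qed
    have cpp: "continuous_on S pp" for S unfolding pp_def by (intro continuous_intros) (use hpos in auto)
    have cp2: "continuous_on S p2" for S unfolding p2_def by (intro continuous_intros) (use hpos in auto)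
    show "continuous_on {-h..h} F" unfolding F_def
      by (intro continuous_intros cpp cp2) (use nz in blast)
    show "continuous_on UNIV cl" unfolding cl_def by (intro continuous_intros)
    show "cl ` UNIV \<subseteq> {-h..h}" unfolding cl_def using hpos by auto
  qed
  have d_pp: "((\<lambda>t. pp (t - 1/2)) has_real_derivative p1 (x - 1/2)) (at x)" for x
    unfolding pp_def p1_def using hpos
    by (auto intro!: derivative_eq_intros simp: field_simps power2_eq_square)
  have d_p1: "((\<lambda>t. p1 (t - 1/2)) has_real_derivative p2 (x - 1/2)) (at x)" for x
    unfolding p2_def p1_def using hpos
    by (auto intro!: derivative_eq_intros simp: field_simps power2_eq_square)
  have d_s1: "((\<lambda>t. sin (m*t)) has_real_derivative m * cos (m*x)) (at x)" for x
    by (auto intro!: derivative_eq_intros)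
  have d_c1: "((\<lambda>t. m * cos (m*t)) has_real_derivative - m\<^sup>2 * sin (m*x)) (at x)" for x
    by (auto intro!: derivative_eq_intros simp: power2_eq_square)
  have d_s2: "((\<lambda>t. sin (m*(1-t))) has_real_derivative - m * cos (m*(1-x))) (at x)" for x
    by (auto intro!: derivative_eq_intros)
  have d_c2: "((\<lambda>t. - m * cos (m*(1-t))) has_real_derivative - m\<^sup>2 * sin (m*(1-x))) (at x)" for x
    by (auto intro!: derivative_eq_intros simp: power2_eq_square)
  have sa: "sin (m*a) = 1" "cos (m*a) = 0" "sin (m*(1-b)) = 1" "cos (m*(1-b)) = 0"
    unfolding ma mb by simp_all
  have dy: "(y has_real_derivative y' x) (at x)" for x
    unfolding y_def y'_def
    by (rule deriv3[OF ab d_s1 d_pp d_s2]) (use sa a_h b_h pph p1h in simp_all)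
  have dy': "(y' has_real_derivative y'' x) (at x)" for x
    unfolding y''_def y'_def
    by (rule deriv3[OF ab d_c1 d_p1 d_c2]) (use sa a_h b_h p1h p2h in simp_all)
  have apos: "a > 0" unfolding a_def using mpos by simp
  have yeq: "y'' x = q x * y x - m\<^sup>2 * y x" for x
  proof -
    consider "x \<le> a" | "a < x" "x \<le> b" | "b < x" by linarith
    then show ?thesis
    proof cases
      case 1 then show ?thesis using q0[of x] unfolding y_def y''_def by simp
    next
      case 2
      have u: "\<bar>x - 1/2\<bar> \<le> h" using 2 a_h b_h by (simp add: abs_le_iff)
      have p: "pp (x - 1/2) > 0" using PF(1)[OF u] by linarith
      have "q x * y x - m\<^sup>2 * y x = F (x - 1/2) * pp (x - 1/2) - m\<^sup>2 * pp (x - 1/2)"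
        using qmid[of x] 2 unfolding y_def by simp
      also have "\<dots> = p2 (x - 1/2)" unfolding F_def using p by simp
      finally show ?thesis unfolding y''_def using 2 by simp
    next
      case 3 then show ?thesis using q0[of x] ab unfolding y_def y''_def by simp
    qed
  qed
  have y0: "y 0 = 0" unfolding y_def using apos by simp
  have a1: "a < 1/2" using ab unfolding b_def by simp
  have y1: "y 1 = 0" unfolding y_def b_def using apos a1 by simp
  have ypos: "\<forall>x\<in>{0<..<1}. y x > 0"
  proof
    fix x :: real assume x: "x \<in> {0<..<1}"
    consider "x \<le> a" | "a < x" "x \<le> b" | "b < x" by linarith
    then show "y x > 0"
    proof cases
      case 1
      have "m * x \<le> m * a" using 1 mpos by (intro mult_left_mono) auto
      moreover have "0 < m * x" using x mpos by simp
      ultimately have "0 < m * x" "m * x < pi" using ma pi_gt_zero by linarith+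
      then show ?thesis unfolding y_def using 1 by (simp add: sin_gt_zero)
    next
      case 2
      have u: "\<bar>x - 1/2\<bar> \<le> h" using 2 a_h b_h by (simp add: abs_le_iff)
      show ?thesis using PF(1)[OF u] 2 ab unfolding y_def by simp
    next
      case 3
      have "m * (1 - x) \<le> m * (1 - b)" using 3 mpos by (intro mult_left_mono) auto
      moreover have "0 < m * (1 - x)" using x mpos by simp
      ultimately have "0 < m * (1 - x)" "m * (1 - x) < pi" using mb pi_gt_zero by linarith+
      then show ?thesis unfolding y_def using 3 ab by (simp add: sin_gt_zero)
    qed
  qed
  have y'b: "\<bar>y' x\<bar> \<le> m" if xab: "x \<le> a \<or> x \<ge> b" for x
  proof -
    consider "x \<le> a" | "x = b" | "b < x" using xab by (metis le_less)
    then show ?thesis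
    proof cases
      case 1 then show ?thesis unfolding y'_def using mpos by (simp add: abs_mult)
    next
      case 2 then show ?thesis unfolding y'_def using mpos ab b_h p1h by simp
    next
      case 3 then show ?thesis unfolding y'_def using mpos ab by (simp add: abs_mult)
    qed
  qed
  show ?thesis
    apply (rule exI[of _ q], rule exI[of _ y], rule exI[of _ y'])
    using qc qb q0 dy dy' yeq y0 y1 ypos y'b unfolding a_def b_def by metis
qed



lemma eig_lower:
  fixes q y y' :: "real \<Rightarrow> real" and M a b K lam :: real
  assumes ab: "0 < a" "a < b" "b < 1"
    and q0: "\<forall>x. x \<le> a \<or> x \<ge> b \<longrightarrow> q x = 0"
    and yd: "\<forall>x. (y has_real_derivative y' x) (at x) \<and>
              (y' has_real_derivative (q x * y x - M * y x)) (at x)"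
    and y0: "y 0 = 0" and y1: "y 1 = 0" and ypos: "\<forall>x\<in>{0<..<1}. y x > 0"
    and y'b: "\<forall>x. x \<le> a \<or> x \<ge> b \<longrightarrow> \<bar>y' x\<bar> \<le> K"
    and eig: "is_eigenvalue q lam"
  shows "M \<le> lam"
proof (rule ccontr)
  assume "\<not> M \<le> lam"
  then have lm: "lam < M" by simp
  have ycont: "isCont y x" for x using yd DERIV_isCont by blast
  have yr: "(y \<longlongrightarrow> 0) (at_right 0)" using ycont[of 0] y0
    by (simp add: isCont_def filterlim_at_split)
  have yl: "(y \<longlongrightarrow> 0) (at_left 1)" using ycont[of 1] y1
    by (simp add: isCont_def filterlim_at_split)
  have yd': "\<forall>x\<in>{0<..<1}. (y has_real_derivative y' x) (at x) \<and>
              (y' has_real_derivative (q x * y x - M * y x)) (at x)" using yd by blast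
  have lim: "((\<lambda>x. y x * w' x - y' x * w x) \<longlongrightarrow> 0) (at_right 0) \<and>
             ((\<lambda>x. y x * w' x - y' x * w x) \<longlongrightarrow> 0) (at_left 1)"
    if wc: "continuous_on {0..1} w" and w0: "w 0 = 0" and w1: "w 1 = 0"
      and wd: "\<forall>x\<in>{0<..<1}. (w has_real_derivative w' x) (at x) \<and>
              (w' has_real_derivative (q x * w x - lam * w x)) (at x)" for w w'
  proof
    obtain K1 where K1: "\<forall>x\<in>{0<..<a}. \<bar>w' x\<bar> \<le> K1"
      using energy[OF wc wd, of 0 a] ab q0 by force
    obtain K2 where K2: "\<forall>x\<in>{b<..<1}. \<bar>w' x\<bar> \<le> K2"
      using energy[OF wc wd, of b 1] ab q0 by force
    have "(w \<longlongrightarrow> w 0) (at 0 within {0..1})" using wc by (simp add: continuous_on_def)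
    then have wr: "(w \<longlongrightarrow> 0) (at_right 0)" using w0 at_within_Icc_at_right[of "0::real" 1] by simp
    have "(w \<longlongrightarrow> w 1) (at 1 within {0..1})" using wc by (simp add: continuous_on_def)
    then have wl: "(w \<longlongrightarrow> 0) (at_left 1)" using w1 at_within_Icc_at_left[of "0::real" 1] by simp
    have e1: "eventually (\<lambda>x. x \<in> {0<..<a}) (at_right 0)" using ab by (intro eventually_at_right_real)
    have e2: "eventually (\<lambda>x. x \<in> {b<..<1}) (at_left 1)" using ab by (intro eventually_at_left_real)
    show "((\<lambda>x. y x * w' x - y' x * w x) \<longlongrightarrow> 0) (at_right 0)"
    proof (rule wlim[OF yr wr])
      show "eventually (\<lambda>x. \<bar>w' x\<bar> \<le> K1) (at_right 0)" using e1 by (rule eventually_mono) (use K1 in auto)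
      show "eventually (\<lambda>x. \<bar>y' x\<bar> \<le> K) (at_right 0)" using e1 by (rule eventually_mono) (use y'b in auto)
    qed
    show "((\<lambda>x. y x * w' x - y' x * w x) \<longlongrightarrow> 0) (at_left 1)"
    proof (rule wlim[OF yl wl])
      show "eventually (\<lambda>x. \<bar>w' x\<bar> \<le> K2) (at_left 1)" using e2 by (rule eventually_mono) (use K2 in auto)
      show "eventually (\<lambda>x. \<bar>y' x\<bar> \<le> K) (at_left 1)" using e2 by (rule eventually_mono) (use y'b in auto)
    qed
  qed
  from eig obtain z z' where zc: "continuous_on {0..1} z" and z0: "z 0 = 0" and z1: "z 1 = 0"
    and x0: "\<exists>x\<in>{0<..<1}. z x \<noteq> 0"
    and zd: "\<forall>x\<in>{0<..<1}. (z has_real_derivative z' x) (at x) \<and>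
            (z' has_real_derivative (q x * z x - lam * z x)) (at x)"
    unfolding is_eigenvalue_def by blast
  from x0 obtain x0 where x0: "0 < x0" "x0 < 1" "z x0 \<noteq> 0" by auto
  show False
  proof (cases "z x0 > 0")
    case True
    from lim[OF zc z0 z1 zd] show False
      using sturm_pos[OF zc z0 z1 x0(1,2) True ypos yd' zd lm] by blast
  next
    case False
    then have pos: "(\<lambda>x. - z x) x0 > 0" using x0 by simp
    have nzc: "continuous_on {0..1} (\<lambda>x. - z x)" using zc by (intro continuous_intros)
    have nzd: "\<forall>x\<in>{0<..<1}. ((\<lambda>x. - z x) has_real_derivative (\<lambda>x. - z' x) x) (at x) \<and>
            ((\<lambda>x. - z' x) has_real_derivative (q x * (\<lambda>x. - z x) x - lam * (\<lambda>x. - z x) x)) (at x)"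
    proof
      fix x :: real assume "x \<in> {0<..<1}"
      then have a: "(z has_real_derivative z' x) (at x)" "(z' has_real_derivative (q x * z x - lam * z x)) (at x)"
        using zd by auto
      show "((\<lambda>x. - z x) has_real_derivative (\<lambda>x. - z' x) x) (at x) \<and>
            ((\<lambda>x. - z' x) has_real_derivative (q x * (\<lambda>x. - z x) x - lam * (\<lambda>x. - z x) x)) (at x)"
        using DERIV_minus[OF a(1)] DERIV_minus[OF a(2)] by (simp add: algebra_simps)
    qed
    from lim[OF nzc _ _ nzd] z0 z1 show False
      using sturm_pos[OF nzc _ _ x0(1,2) pos ypos yd' nzd lm] z0 z1 by simp
  qed
qed




theorem mainTheorem14:
  fixes r :: "real \<Rightarrow> real" and \<gamma> :: real
  assumes "continuous_on {0<..<1} r"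
    and "\<forall>a b. 0 < a \<longrightarrow> a \<le> b \<longrightarrow> b < 1 \<longrightarrow> Inf (r ` {a..b}) > 0"
    and "\<gamma> > 1"
  shows "\<exists>\<delta>>0. B_set r \<gamma> \<delta> \<noteq> {}"
proof -
  have rc: "continuous_on {1/4..3/4} r" using assms(1) by (rule continuous_on_subset) auto
  have "compact (r ` {1/4..3/4})" by (rule compact_continuous_image[OF rc]) simp
  then obtain B where B: "\<forall>x\<in>{1/4..3/4}. \<bar>r x\<bar> \<le> B"
    using compact_imp_bounded bounded_iff by (metis image_eqI real_norm_def)
  define R where "R = \<bar>B\<bar> + 1"
  have R: "R > 0" "\<forall>x\<in>{1/4..3/4}. r x \<le> R" using B unfolding R_def by force+
  define C where "C = R * 64 powr \<gamma>"
  have Cpos: "C > 0" unfolding C_def using R by simp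
  define t where "t = min (1/2) (1 / (C + 1))"
  have t0: "t > 0" unfolding t_def using Cpos by simp
  have t1: "t \<le> 1/2" unfolding t_def by simp
  have "t \<le> 1 / (C + 1)" unfolding t_def by simp
  then have "C * t \<le> C * (1 / (C + 1))" using Cpos by (intro mult_left_mono) auto
  also have "\<dots> < 1" using Cpos by (simp add: field_simps)
  finally have Ct: "C * t < 1" .
  define m where "m = pi + t"
  have m1: "pi < m" "m \<le> pi + 1/2" unfolding m_def using t0 t1 by auto
  have mpos: "m > 0" using m1 pi_gt_zero by linarith
  obtain q y y' where qc: "continuous_on UNIV q" and qb: "\<forall>x. 0 \<le> q x \<and> q x \<le> 64"
    and q0': "\<forall>x. x \<le> pi/(2*m) \<or> x \<ge> 1 - pi/(2*m) \<longrightarrow> q x = 0"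
    and yd: "\<forall>x. (y has_real_derivative y' x) (at x) \<and>
          (y' has_real_derivative (q x * y x - m\<^sup>2 * y x)) (at x)"
    and y0: "y 0 = 0" and y1: "y 1 = 0" and ypos: "\<forall>x\<in>{0<..<1}. y x > 0"
    and y'b': "\<forall>x. x \<le> pi/(2*m) \<or> x \<ge> 1 - pi/(2*m) \<longrightarrow> \<bar>y' x\<bar> \<le> m"
    using construction[OF m1] by blast
  define a where "a = pi/(2*m)"
  define b where "b = 1 - a"
  have q0: "\<forall>x. x \<le> a \<or> x \<ge> b \<longrightarrow> q x = 0" using q0' unfolding a_def b_def .
  have y'b: "\<forall>x. x \<le> a \<or> x \<ge> b \<longrightarrow> \<bar>y' x\<bar> \<le> m" using y'b' unfolding a_def b_def .
  have apos: "0 < a" unfolding a_def using mpos by simp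
  have a4: "1/4 \<le> a" unfolding a_def using mpos m1 pi_gt3 by (simp add: field_simps)
  have a2: "a < 1/2" unfolding a_def using mpos m1 by (simp add: field_simps)
  have ab: "0 < a" "a < b" "b < 1" using apos a2 unfolding b_def by auto
  have b4: "b \<le> 3/4" using a4 unfolding b_def by simp
  have bma0: "b - a = (m - pi) / m" unfolding b_def a_def using mpos by (simp add: field_simps)
  have bma: "b - a = t / m" unfolding bma0 m_def by simp
  have "t / m \<le> t" using t0 m1 pi_gt3 by (simp add: field_simps)
  then have bma_t: "b - a \<le> t" using bma by simp
  define \<delta> where "\<delta> = m\<^sup>2 - pi\<^sup>2"
  have dpos: "\<delta> > 0" unfolding \<delta>_def using m1 pi_gt_zero by (simp add: power_strict_mono)
  have eig: "is_eigenvalue q (m\<^sup>2)"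
    unfolding is_eigenvalue_def
  proof (intro exI conjI)
    show "continuous_on {0..1} y" using yd
      by (intro continuous_at_imp_continuous_on) (blast intro: DERIV_isCont)
    show "y 0 = 0" "y 1 = 0" by (fact y0, fact y1)
    have "y (1/2) > 0" using ypos by simp
    then show "\<exists>x\<in>{0<..<1}. y x \<noteq> 0" by (intro bexI[of _ "1/2"]) auto
    show "\<forall>x\<in>{0<..<1}. (y has_real_derivative y' x) (at x) \<and>
          (y' has_real_derivative (q x * y x - m\<^sup>2 * y x)) (at x)" using yd by blast
  qed
  have low: "m\<^sup>2 \<le> lam" if "is_eigenvalue q lam" for lam
    using eig_lower[OF ab q0 yd y0 y1 ypos y'b that] .
  have lam0: "lambda0 q = m\<^sup>2" unfolding lambda0_def
    by (rule cInf_eq_minimum) (use eig low in auto)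
  have integ: "(\<integral>\<^sup>+ x\<in>{0<..<1}. ennreal (r x * q x powr \<gamma>) \<partial>lborel) \<le> 1"
  proof -
    have "(\<integral>\<^sup>+ x\<in>{0<..<1}. ennreal (r x * q x powr \<gamma>) \<partial>lborel)
        \<le> (\<integral>\<^sup>+ x. ennreal C * indicator {a..b} x \<partial>lborel)"
    proof (rule nn_integral_mono)
      fix x :: real
      show "ennreal (r x * q x powr \<gamma>) * indicator {0<..<1} x \<le> ennreal C * indicator {a..b} x"
      proof (cases "x \<in> {a..b}")
        case True
        have x: "x \<in> {1/4..3/4}" "x \<in> {0<..<1}" using True a4 b4 by auto
        have "q x powr \<gamma> \<le> 64 powr \<gamma>" using qb assms(3) by (intro powr_mono2) auto
        moreover have "0 \<le> q x powr \<gamma>" by simp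
        ultimately have "r x * q x powr \<gamma> \<le> R * 64 powr \<gamma>"
          using R x by (meson mult_mono order.trans mult_right_mono less_imp_le)
        then have "ennreal (r x * q x powr \<gamma>) \<le> ennreal C" unfolding C_def by (rule ennreal_leI)
        then show ?thesis using True x by simp
      next
        case False
        then have "x \<le> a \<or> x \<ge> b" by auto
        then have "q x = 0" using q0 by auto
        then show ?thesis using False assms(3) by simp
      qed
    qed
    also have "\<dots> = ennreal C * emeasure lborel {a..b}" by (rule nn_integral_cmult_indicator) simp
    also have "\<dots> = ennreal (C * (b - a))" using ab Cpos by (simp add: ennreal_mult)
    also have "\<dots> \<le> 1"
    proof -
      have "C * (b - a) \<le> C * t" using bma_t Cpos by (intro mult_left_mono) auto
      then show ?thesis using Ct by simp
    qed
    finally show ?thesis .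
  qed
  have "q \<in> B_set r \<gamma> \<delta>"
    unfolding B_set_def A_set_def
  proof (intro CollectI conjI)
    show "loc_integrable01 q" unfolding loc_integrable01_def
      by (intro allI impI continuous_imp_integrable_real continuous_on_subset[OF qc]) auto
    show "\<forall>x\<in>{0<..<1}. 0 \<le> q x" using qb by auto
    show "(\<integral>\<^sup>+ x\<in>{0<..<1}. ennreal (r x * q x powr \<gamma>) \<partial>lborel) \<le> 1" by (fact integ)
    show "continuous_on {0<..<1} q" using qc by (rule continuous_on_subset) auto
    show "compact_support01 q" unfolding compact_support01_def
      using ab q0 by (intro exI[of _ a] exI[of _ b]) auto
    show "pi\<^sup>2 + \<delta> \<le> lambda0 q" unfolding lam0 \<delta>_def by simp
  qed
  then show ?thesis using dpos by blast
qed



end
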